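(* Let $X$ be an infinite-dimensional complex Banach space and let $\phi:\mathcal{B}(X)\to\mathcal{B}(X)$ be a surjective map such that $K(\phi(T)\phi(S)+\phi(S)\phi(T))=K(TS+ST)$ for all $T,S\in\mathcal{B}(X)$. Then for every $R\in\mathcal{B}(X)$, $\phi(R)=0$ if and only if $R=0$.
   Context: $\mathcal{B}(X)$ denotes the algebra of all bounded linear operators on $X$. For $T\in\mathcal{B}(X)$, the analytic core $K(T)$ is the set of all $x\in X$ for which there exist $\delta>0$ and a sequence $(x_n)_{n\ge 0}\subset X$ with $x_0=x$, $Tx_{n+1}=x_n$ and $\|x_n\|\le \delta^n\|x\|$ for all $n\ge 0$. *)

theory Defs
  imports "HOL-Analysis.Analysis"
begin

text \<open>Complex Banach spaces: a real Banach space together with a compatible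
  complex scalar multiplication (the distribution has no complex vector space class).\<close>
class complex_banach = banach +
  fixes scaleC :: "complex \<Rightarrow> 'a \<Rightarrow> 'a"
  assumes scaleC_of_real: "scaleC (complex_of_real r) x = scaleR r x"
    and scaleC_add_right: "scaleC a (x + y) = scaleC a x + scaleC a y"
    and scaleC_add_left: "scaleC (a + b) x = scaleC a x + scaleC b x"
    and scaleC_scaleC: "scaleC a (scaleC b x) = scaleC (a * b) x"
    and scaleC_one: "scaleC 1 x = x"
    and norm_scaleC: "norm (scaleC a x) = cmod a * norm x"

definition complex_span :: "'a::complex_banach set \<Rightarrow> 'a set" where
  "complex_span S = {(\<Sum>v\<in>F. scaleC (c v) v) | F c. finite F \<and> F \<subseteq> S}"

definition infinite_dimensional :: "'a::complex_banach itself \<Rightarrow> bool" where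
  "infinite_dimensional TYPE('a) \<longleftrightarrow> (\<forall>F::'a set. finite F \<longrightarrow> complex_span F \<noteq> UNIV)"

definition bounded_operators :: "('a::complex_banach \<Rightarrow> 'a) set" where
  "bounded_operators = {T. (\<forall>x y. T (x + y) = T x + T y)
                          \<and> (\<forall>c x. T (scaleC c x) = scaleC c (T x))
                          \<and> (\<exists>M. \<forall>x. norm (T x) \<le> M * norm x)}"

definition analytic_core :: "('a::complex_banach \<Rightarrow> 'a) \<Rightarrow> 'a set" where
  "analytic_core T = {x. \<exists>\<delta>>0. \<exists>xs::nat \<Rightarrow> 'a. xs 0 = x
        \<and> (\<forall>n. T (xs (Suc n)) = xs n)
        \<and> (\<forall>n. norm (xs n) \<le> \<delta> ^ n * norm x)}"

end

theory Submission
  imports Defs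
begin


definition hbP :: "'a::real_normed_vector \<Rightarrow> ('a \<times> real) set \<Rightarrow> bool" where
 "hbP x0 G \<longleftrightarrow> (x0, norm x0) \<in> G \<and> (\<forall>x a y b. (x,a)\<in>G \<longrightarrow> (y,b)\<in>G \<longrightarrow> (x+y,a+b)\<in>G)
   \<and> (\<forall>x a r. (x,a)\<in>G \<longrightarrow> (r *\<^sub>R x, r*a)\<in>G) \<and> (\<forall>x a. (x,a)\<in>G \<longrightarrow> a \<le> norm x)"

lemma hbP_unique:
  assumes "hbP x0 G" "(x,a)\<in>G" "(x,b)\<in>G" shows "a = b"
proof -
  have s: "((-1) *\<^sub>R x, (-1)*b) \<in> G" using assms unfolding hbP_def by blast
  have "(x + (-1) *\<^sub>R x, a + (-1)*b) \<in> G" using assms(1,2) s unfolding hbP_def by blast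
  hence "a - b \<le> 0" using assms(1) unfolding hbP_def by fastforce
  have s2: "((-1) *\<^sub>R x, (-1)*a) \<in> G" using assms unfolding hbP_def by blast
  have "(x + (-1) *\<^sub>R x, b + (-1)*a) \<in> G" using assms(1,3) s2 unfolding hbP_def by blast
  hence "b - a \<le> 0" using assms(1) unfolding hbP_def by fastforce
  with \<open>a - b \<le> 0\<close> show ?thesis by simp
qed

lemma hbP_zero: assumes "hbP x0 G" shows "(0,0) \<in> G"
proof -
  have "(0 *\<^sub>R x0, 0 * norm x0) \<in> G" using assms unfolding hbP_def by blast
  thus ?thesis by simp
qed

lemma hbP_extend:
  assumes P: "hbP x0 M" and ny: "\<not> (\<exists>a. (y,a) \<in> M)"
  shows "\<exists>M'. hbP x0 M' \<and> M \<subseteq> M' \<and> M' \<noteq> M"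
proof -
  have add: "\<And>x a z b. (x,a)\<in>M \<Longrightarrow> (z,b)\<in>M \<Longrightarrow> (x+z,a+b)\<in>M" using P unfolding hbP_def by blast
  have scl: "\<And>x a r. (x,a)\<in>M \<Longrightarrow> (r *\<^sub>R x, r*a)\<in>M" using P unfolding hbP_def by blast
  have dom: "\<And>x a. (x,a)\<in>M \<Longrightarrow> a \<le> norm x" using P unfolding hbP_def by blast
  have z: "(0,0)\<in>M" using hbP_zero[OF P] .
  have key: "a - norm (u - y) \<le> norm (w + y) - b" if "(u,a)\<in>M" "(w,b)\<in>M" for u a w b
  proof -
    have "a + b \<le> norm (u + w)" using dom[OF add[OF that]] .
    also have "u + w = (u - y) + (w + y)" by simp
    also have "norm \<dots> \<le> norm (u - y) + norm (w + y)" by (rule norm_triangle_ineq)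
    finally show ?thesis by simp
  qed
  define Sset where "Sset = {a - norm (u - y) | u a. (u,a)\<in>M}"
  define c where "c = Sup Sset"
  have ne: "Sset \<noteq> {}" using z unfolding Sset_def by blast
  have bdd: "bdd_above Sset" unfolding Sset_def bdd_above_def
    using key[OF _ z] by fastforce
  have up: "a - norm (u - y) \<le> c" if "(u,a)\<in>M" for u a
    unfolding c_def by (rule cSup_upper[OF _ bdd]) (use that Sset_def in blast)
  have lo: "c \<le> norm (w + y) - b" if "(w,b)\<in>M" for w b
    unfolding c_def by (rule cSup_least[OF ne]) (use key[OF _ that] Sset_def in blast)
  define M' where "M' = {(x + t *\<^sub>R y, a + t*c) | x a t. (x,a)\<in>M}"
  have sub: "M \<subseteq> M'"
  proof
    fix p assume "p \<in> M" then obtain x a where "p = (x,a)" "(x,a)\<in>M" by (cases p) auto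
    hence "p = (x + 0 *\<^sub>R y, a + 0*c)" "(x,a)\<in>M" by auto
    thus "p \<in> M'" unfolding M'_def by blast
  qed
  have yc: "(y, c) \<in> M'"
  proof -
    have "(y,c) = (0 + 1 *\<^sub>R y, 0 + 1*c)" by simp
    thus ?thesis unfolding M'_def using z by blast
  qed
  have dom': "a + t*c \<le> norm (x + t *\<^sub>R y)" if xa: "(x,a)\<in>M" for x a t
  proof (cases "t = 0")
    case True thus ?thesis using dom[OF xa] by simp
  next
    case False
    show ?thesis
    proof (cases "t > 0")
      case True
      have "c \<le> norm ((1/t) *\<^sub>R x + y) - (1/t)*a" using lo[OF scl[OF xa]] .
      hence "t*c \<le> t * (norm ((1/t) *\<^sub>R x + y) - (1/t)*a)" using True by (simp add: mult_left_mono)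
      hence "t*c \<le> t * norm ((1/t) *\<^sub>R x + y) - a" using True by (simp add: right_diff_distrib)
      also have "t * norm ((1/t) *\<^sub>R x + y) = norm (t *\<^sub>R ((1/t) *\<^sub>R x + y))"
        using True by simp
      also have "t *\<^sub>R ((1/t) *\<^sub>R x + y) = x + t *\<^sub>R y" using True by (simp add: scaleR_add_right)
      finally show ?thesis by simp
    next
      case False
      hence tn: "t < 0" using \<open>t \<noteq> 0\<close> by simp
      define s where "s = -t"
      have sp: "s > 0" using tn s_def by simp
      have "(1/s)*a - norm ((1/s) *\<^sub>R x - y) \<le> c" using up[OF scl[OF xa]] .
      hence "s * ((1/s)*a - norm ((1/s) *\<^sub>R x - y)) \<le> s*c" using sp by (simp add: mult_left_mono)
      hence "a - s * norm ((1/s) *\<^sub>R x - y) \<le> s*c" using sp by (simp add: right_diff_distrib)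
      also have "s * norm ((1/s) *\<^sub>R x - y) = norm (s *\<^sub>R ((1/s) *\<^sub>R x - y))"
        using sp by simp
      also have "s *\<^sub>R ((1/s) *\<^sub>R x - y) = x + t *\<^sub>R y" using sp s_def by (simp add: scaleR_diff_right)
      finally show ?thesis using s_def by simp
    qed
  qed
  have "hbP x0 M'"
    unfolding hbP_def
  proof (intro conjI allI impI)
    show "(x0, norm x0) \<in> M'" using sub P unfolding hbP_def by blast
  next
    fix x a z b assume "(x,a)\<in>M'" "(z,b)\<in>M'"
    then obtain x1 a1 t1 x2 a2 t2 where h: "x = x1 + t1 *\<^sub>R y" "a = a1 + t1*c" "(x1,a1)\<in>M"
      "z = x2 + t2 *\<^sub>R y" "b = a2 + t2*c" "(x2,a2)\<in>M" unfolding M'_def by blast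
    have "(x1+x2, a1+a2)\<in>M" using add h by blast
    moreover have "x + z = (x1+x2) + (t1+t2) *\<^sub>R y" "a + b = (a1+a2) + (t1+t2)*c"
      using h by (auto simp: algebra_simps)
    ultimately show "(x+z, a+b)\<in>M'" unfolding M'_def by blast
  next
    fix x a r assume "(x,a)\<in>M'"
    then obtain x1 a1 t1 where h: "x = x1 + t1 *\<^sub>R y" "a = a1 + t1*c" "(x1,a1)\<in>M"
      unfolding M'_def by blast
    have "(r *\<^sub>R x1, r*a1)\<in>M" using scl h by blast
    moreover have "r *\<^sub>R x = r *\<^sub>R x1 + (r*t1) *\<^sub>R y" "r*a = r*a1 + (r*t1)*c"
      using h by (auto simp: algebra_simps)
    ultimately show "(r *\<^sub>R x, r*a)\<in>M'" unfolding M'_def by blast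
  next
    fix x a assume "(x,a)\<in>M'"
    then obtain x1 a1 t1 where h: "x = x1 + t1 *\<^sub>R y" "a = a1 + t1*c" "(x1,a1)\<in>M"
      unfolding M'_def by blast
    thus "a \<le> norm x" using dom' by simp
  qed
  moreover have "M' \<noteq> M" using yc ny by blast
  ultimately show ?thesis using sub by blast
qed

lemma real_hahn_banach:
  fixes x0 :: "'a::real_normed_vector"
  shows "\<exists>f. (\<forall>x y. f (x+y) = f x + f y) \<and> (\<forall>r x. f (r *\<^sub>R x) = r * f x)
            \<and> (\<forall>x. f x \<le> norm x) \<and> f x0 = norm x0"
proof -
  define A where "A = {G. hbP x0 G}"
  define G0 where "G0 = {(r *\<^sub>R x0, r * norm x0) | r. True}"
  have "hbP x0 G0" unfolding hbP_def
  proof (intro conjI allI impI)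
    have "(x0, norm x0) = (1 *\<^sub>R x0, 1 * norm x0)" by simp
    thus "(x0, norm x0) \<in> G0" unfolding G0_def by blast
  next
    fix x a y b assume "(x,a) \<in> G0" "(y,b) \<in> G0"
    then obtain r s where "x = r *\<^sub>R x0" "a = r * norm x0" "y = s *\<^sub>R x0" "b = s * norm x0"
      unfolding G0_def by blast
    hence "(x+y,a+b) = ((r+s) *\<^sub>R x0, (r+s) * norm x0)" by (simp add: algebra_simps)
    thus "(x+y,a+b) \<in> G0" unfolding G0_def by blast
  next
    fix x a r assume "(x,a) \<in> G0"
    then obtain q where "x = q *\<^sub>R x0" "a = q * norm x0" unfolding G0_def by blast
    hence "(r *\<^sub>R x, r*a) = ((r * q) *\<^sub>R x0, (r * q) * norm x0)" by (simp add: algebra_simps)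
    thus "(r *\<^sub>R x, r*a) \<in> G0" unfolding G0_def by blast
  next
    fix x a assume "(x,a) \<in> G0"
    then obtain s where "x = s *\<^sub>R x0" "a = s * norm x0" unfolding G0_def by blast
    thus "a \<le> norm x" by (simp add: abs_ge_self mult_right_mono)
  qed
  hence G0: "G0 \<in> A" unfolding A_def by simp
  have "\<forall>C\<in>chains A. \<exists>U\<in>A. \<forall>X\<in>C. X \<subseteq> U"
  proof
    fix C assume C: "C \<in> chains A"
    show "\<exists>U\<in>A. \<forall>X\<in>C. X \<subseteq> U"
    proof (cases "C = {}")
      case True thus ?thesis using G0 by blast
    next
      case False
      have CA: "C \<subseteq> A" and ch: "chain\<^sub>\<subseteq> C" using C unfolding chains_def by auto
      have two: "\<exists>G\<in>C. p \<in> G \<and> q \<in> G" if pq: "p \<in> \<Union>C" "q \<in> \<Union>C" for p q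
      proof -
        obtain G1 G2 where "G1\<in>C" "G2\<in>C" "p\<in>G1" "q\<in>G2" using pq by blast
        thus ?thesis using ch unfolding chain_subset_def by blast
      qed
      have "hbP x0 (\<Union>C)" unfolding hbP_def
      proof (intro conjI allI impI)
        obtain G where "G \<in> C" using False by blast
        thus "(x0, norm x0) \<in> \<Union>C" using CA unfolding A_def hbP_def by blast
      next
        fix x a y b assume "(x,a) \<in> \<Union>C" "(y,b) \<in> \<Union>C"
        then obtain G where "G\<in>C" "(x,a)\<in>G" "(y,b)\<in>G" using two by blast
        thus "(x+y,a+b) \<in> \<Union>C" using CA unfolding A_def hbP_def by blast
      next
        fix x a r assume "(x,a) \<in> \<Union>C"
        then obtain G where "G\<in>C" "(x,a)\<in>G" by blast
        thus "(r *\<^sub>R x, r*a) \<in> \<Union>C" using CA unfolding A_def hbP_def by blast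
      next
        fix x a assume "(x,a) \<in> \<Union>C"
        then obtain G where "G\<in>C" "(x,a)\<in>G" by blast
        thus "a \<le> norm x" using CA unfolding A_def hbP_def by blast
      qed
      thus ?thesis unfolding A_def by blast
    qed
  qed
  from Zorn_Lemma2[OF this] obtain M where MA: "M \<in> A" and mx: "\<forall>X\<in>A. M \<subseteq> X \<longrightarrow> X = M" by blast
  have P: "hbP x0 M" using MA A_def by simp
  have tot: "\<exists>a. (y,a)\<in>M" for y
  proof (rule ccontr)
    assume "\<not> (\<exists>a. (y,a)\<in>M)"
    from hbP_extend[OF P this] obtain M' where "hbP x0 M'" "M \<subseteq> M'" "M' \<noteq> M" by blast
    thus False using mx A_def by blast
  qed
  define f where "f y = (SOME a. (y,a)\<in>M)" for y
  have fM: "(y, f y) \<in> M" for y unfolding f_def using tot by (rule someI_ex)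
  have fe: "f y = a" if "(y,a)\<in>M" for y a using hbP_unique[OF P fM that] .
  show ?thesis
  proof (intro exI[of _ f] conjI allI)
    fix x y show "f (x+y) = f x + f y" using P fM fe unfolding hbP_def by blast
  next
    fix r x show "f (r *\<^sub>R x) = r * f x" using P fM fe unfolding hbP_def by blast
  next
    fix x show "f x \<le> norm x" using P fM unfolding hbP_def by blast
  next
    show "f x0 = norm x0" using P fe unfolding hbP_def by blast
  qed
qed



lemma scaleC_zero_left[simp]: "scaleC 0 (x::'a::complex_banach) = 0"
  using scaleC_of_real[of 0 x] by simp

lemma scaleC_zero_right[simp]: "scaleC c (0::'a::complex_banach) = 0"
  using scaleC_add_right[of c "0::'a" 0] by simp

lemma scaleC_decomp: "scaleC c (x::'a::complex_banach) = Re c *\<^sub>R x + Im c *\<^sub>R scaleC \<i> x"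
proof -
  have "c = complex_of_real (Re c) + complex_of_real (Im c) * \<i>" by (simp add: complex_eq_iff)
  hence "scaleC c x = scaleC (complex_of_real (Re c)) x + scaleC (complex_of_real (Im c)) (scaleC \<i> x)"
    by (metis scaleC_add_left scaleC_scaleC)
  thus ?thesis by (simp add: scaleC_of_real)
qed

lemma complex_functional:
  fixes x0 :: "'a::complex_banach"
  assumes "x0 \<noteq> 0"
  shows "\<exists>g. (\<forall>x y. g (x+y) = g x + g y) \<and> (\<forall>c x. g (scaleC c x) = c * g x)
            \<and> (\<forall>x. cmod (g x) \<le> 2 * norm x) \<and> g x0 \<noteq> 0"
proof -
  obtain f :: "'a \<Rightarrow> real" where fa: "\<And>x y. f (x+y) = f x + f y" and fs: "\<And>r x. f (r *\<^sub>R x) = r * f x"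
    and fb: "\<And>x. f x \<le> norm x" and f0: "f x0 = norm x0"
    using real_hahn_banach[of x0] by blast
  have fabs: "\<bar>f x\<bar> \<le> norm x" for x
  proof -
    have "f ((-1) *\<^sub>R x) \<le> norm ((-1) *\<^sub>R x)" by (rule fb)
    hence "- f x \<le> norm x" using fs[of "-1" x] by simp
    thus ?thesis using fb[of x] by simp
  qed
  define g where "g x = Complex (f x) (- f (scaleC \<i> x))" for x
  have fC: "f (scaleC c x) = Re c * f x + Im c * f (scaleC \<i> x)" for c x
    by (subst scaleC_decomp) (simp add: fa fs)
  have ii: "scaleC \<i> (scaleC c x) = scaleC (\<i> * c) x" for c x by (simp add: scaleC_scaleC)
  show ?thesis
  proof (intro exI[of _ g] conjI allI)
    fix x y show "g (x+y) = g x + g y" unfolding g_def by (simp add: scaleC_add_right fa complex_eq_iff)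
  next
    fix c x
    have e1: "f (scaleC c x) = Re c * f x + Im c * f (scaleC \<i> x)" by (rule fC)
    have e2: "f (scaleC \<i> (scaleC c x)) = - Im c * f x + Re c * f (scaleC \<i> x)"
      unfolding ii using fC[of "\<i> * c" x] by simp
    show "g (scaleC c x) = c * g x"
      unfolding g_def e1 e2 by (simp add: complex_eq_iff algebra_simps)
  next
    fix x
    have "cmod (g x) \<le> \<bar>f x\<bar> + \<bar>f (scaleC \<i> x)\<bar>" using cmod_le[of "g x"] unfolding g_def by simp
    also have "\<dots> \<le> norm x + norm (scaleC \<i> x)" using fabs by (simp add: add_mono)
    also have "norm (scaleC \<i> x) = norm x" by (simp add: norm_scaleC)
    finally show "cmod (g x) \<le> 2 * norm x" by simp
  next
    show "g x0 \<noteq> 0" unfolding g_def using f0 assms by (simp add: complex_eq_iff)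
  qed
qed

lemma bo_add: "T \<in> bounded_operators \<Longrightarrow> T (x+y) = T x + T y"
  unfolding bounded_operators_def by blast
lemma bo_scale: "T \<in> bounded_operators \<Longrightarrow> T (scaleC c x) = scaleC c (T x)"
  unfolding bounded_operators_def by blast
lemma bo_zero: "T \<in> bounded_operators \<Longrightarrow> T 0 = 0"
  using bo_scale[of T 0 0] by simp

lemma eigen_core:
  assumes lin: "\<And>c z. T (scaleC c z) = scaleC c (T z)" and ev: "T y = scaleC l y" and l0: "l \<noteq> 0"
  shows "y \<in> analytic_core T"
proof -
  define xs where "xs n = scaleC (inverse l ^ n) y" for n
  have a: "xs 0 = y" unfolding xs_def by (simp add: scaleC_one)
  have b: "T (xs (Suc n)) = xs n" for n
  proof -
    have "T (xs (Suc n)) = scaleC (inverse l ^ Suc n * l) y"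
      unfolding xs_def lin ev scaleC_scaleC ..
    also have "inverse l ^ Suc n * l = inverse l ^ n" using l0 by simp
    finally show ?thesis unfolding xs_def .
  qed
  have c: "norm (xs n) \<le> inverse (cmod l) ^ n * norm y" for n
    unfolding xs_def by (simp add: norm_scaleC norm_power norm_inverse)
  have d: "0 < inverse (cmod l)" using l0 by simp
  show ?thesis unfolding analytic_core_def using a b c d by blast
qed



lemma scaleC_minus_left: "scaleC (-c) (x::'a::complex_banach) = - scaleC c x"
  using scaleC_add_left[of c "-c" x] by (simp add: eq_neg_iff_add_eq_0 add.commute)

lemma id_bo: "(\<lambda>z. z) \<in> bounded_operators"
  unfolding bounded_operators_def by (auto intro: exI[of _ 1])

lemma key_nonzero:
  fixes R :: "'a::complex_banach \<Rightarrow> 'a"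
  assumes R: "R \<in> bounded_operators" and Rx: "R x \<noteq> 0"
  shows "\<exists>S\<in>bounded_operators. \<exists>y. y \<noteq> 0 \<and> y \<in> analytic_core (\<lambda>z. R (S z) + S (R z))"
proof (cases "\<exists>\<mu>. R x = scaleC \<mu> x")
  case True
  then obtain \<mu> where mu: "R x = scaleC \<mu> x" by blast
  have x0: "x \<noteq> 0" using Rx bo_zero[OF R] by auto
  have m0: "\<mu> \<noteq> 0" using Rx mu by auto
  have lin: "R (scaleC c z) + R (scaleC c z) = scaleC c (R z + R z)" for c z
    by (simp add: bo_scale[OF R] scaleC_add_right)
  have ev: "R x + R x = scaleC (\<mu> + \<mu>) x" by (simp only: mu scaleC_add_left)
  have "x \<in> analytic_core (\<lambda>z. R z + R z)"
    by (rule eigen_core[OF lin ev]) (use m0 in simp)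
  thus ?thesis using id_bo x0 by fastforce
next
  case False
  define v where "v = R x"
  define w where "w = R v"
  have v0: "v \<noteq> 0" using Rx v_def by simp
  obtain g where ga: "\<And>x y. g (x+y) = g x + g y" and gs: "\<And>c x. g (scaleC c x) = c * g x"
    and gb: "\<And>x. cmod (g x) \<le> 2 * norm x" and gv: "g v \<noteq> 0"
    using complex_functional[OF v0] by blast
  define S where "S z = scaleC (g z) x" for z
  have Sbo: "S \<in> bounded_operators" unfolding bounded_operators_def
  proof (intro CollectI conjI allI exI[of _ "2 * norm x"])
    fix z y show "S (z + y) = S z + S y" unfolding S_def ga by (rule scaleC_add_left)
  next
    fix c z show "S (scaleC c z) = scaleC c (S z)" unfolding S_def gs by (simp add: scaleC_scaleC)
  next
    fix z have "norm (S z) = cmod (g z) * norm x" unfolding S_def by (rule norm_scaleC)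
    also have "\<dots> \<le> 2 * norm z * norm x" by (rule mult_right_mono[OF gb]) simp
    finally show "norm (S z) \<le> 2 * norm x * norm z" by (simp add: mult_ac)
  qed
  define T where "T z = R (S z) + S (R z)" for z
  have Tz: "T z = scaleC (g z) v + scaleC (g (R z)) x" for z
    unfolding T_def S_def v_def by (simp add: bo_scale[OF R])
  have Tlin: "T (scaleC c z) = scaleC c (T z)" for c z
    unfolding Tz by (simp add: bo_scale[OF R] gs scaleC_add_right scaleC_scaleC)
  define a where "a = g x"
  define b where "b = g v"
  define cc where "cc = g w"
  define s0 where "s0 = csqrt (a * cc)"
  define s where "s = (if b + s0 \<noteq> 0 then s0 else - s0)"
  have ss: "s * s = a * cc"
  proof -
    have "s0 * s0 = a * cc" unfolding s0_def using power2_csqrt[of "a*cc"] by (simp add: power2_eq_square)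
    thus ?thesis unfolding s_def by simp
  qed
  have b0: "b \<noteq> 0" using gv b_def by simp
  define l where "l = b + s"
  have l0: "l \<noteq> 0" unfolding l_def s_def using b0 by (auto simp: algebra_simps)
  define \<alpha> where "\<alpha> = (if cc = 0 \<and> s = 0 then 0 else cc)"
  define \<beta> where "\<beta> = (if cc = 0 \<and> s = 0 then 1 else s)"
  have ab0: "\<alpha> \<noteq> 0 \<or> \<beta> \<noteq> 0" unfolding \<alpha>_def \<beta>_def by auto
  have eq1: "\<alpha> * b + \<beta> * cc = l * \<alpha>" unfolding \<alpha>_def \<beta>_def l_def by (auto simp: algebra_simps)
  have eq2: "\<alpha> * a + \<beta> * b = l * \<beta>" unfolding \<alpha>_def \<beta>_def l_def using ss
    by (auto simp: algebra_simps)
  define y where "y = scaleC \<alpha> x + scaleC \<beta> v"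
  have gy: "g y = \<alpha> * a + \<beta> * b" unfolding y_def ga gs a_def b_def ..
  have gRy: "g (R y) = \<alpha> * b + \<beta> * cc"
    unfolding y_def bo_add[OF R] bo_scale[OF R] ga gs b_def cc_def w_def v_def ..
  have Ty: "T y = scaleC l y"
  proof -
    have "T y = scaleC (l * \<beta>) v + scaleC (l * \<alpha>) x" unfolding Tz gy gRy eq1 eq2 ..
    also have "\<dots> = scaleC l y" unfolding y_def scaleC_add_right scaleC_scaleC by (simp add: add.commute)
    finally show ?thesis .
  qed
  have y0: "y \<noteq> 0"
  proof
    assume y: "y = 0"
    show False
    proof (cases "\<beta> = 0")
      case True
      hence "\<alpha> \<noteq> 0" using ab0 by simp
      moreover have "scaleC \<alpha> x = 0" using y True unfolding y_def by simp
      ultimately have "x = 0" using norm_scaleC[of \<alpha> x] by simp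
      thus False using Rx bo_zero[OF R] by simp
    next
      case nb: False
      have "scaleC (inverse \<beta>) y = scaleC (\<alpha> / \<beta>) x + v"
        unfolding y_def scaleC_add_right scaleC_scaleC using nb by (simp add: field_simps scaleC_one)
      hence "v = - scaleC (\<alpha> / \<beta>) x" using y by (simp add: eq_neg_iff_add_eq_0 add.commute)
      hence "R x = scaleC (- (\<alpha> / \<beta>)) x" unfolding v_def scaleC_minus_left .
      thus False using False by blast
    qed
  qed
  have "y \<in> analytic_core T" by (rule eigen_core[OF Tlin Ty l0])
  thus ?thesis using Sbo y0 unfolding T_def by blast
qed

lemma core_const0: "y \<in> analytic_core (\<lambda>z. 0) \<Longrightarrow> y = 0"
  unfolding analytic_core_def by auto

lemma zero_criterion:
  fixes R :: "'a::complex_banach \<Rightarrow> 'a"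
  assumes R: "R \<in> bounded_operators"
    and h: "\<And>S. S \<in> bounded_operators \<Longrightarrow> analytic_core (\<lambda>z. R (S z) + S (R z)) = analytic_core (\<lambda>z. 0)"
  shows "R = (\<lambda>x. 0)"
proof (rule ccontr)
  assume "R \<noteq> (\<lambda>x. 0)"
  then obtain x where "R x \<noteq> 0" by blast
  from key_nonzero[OF R this] obtain S y where "S \<in> bounded_operators" "y \<noteq> 0"
    "y \<in> analytic_core (\<lambda>z. R (S z) + S (R z))" by blast
  thus False using h core_const0 by blast
qed


lemma zero_bo: "(\<lambda>x. 0) \<in> (bounded_operators :: ('a::complex_banach \<Rightarrow> 'a) set)"
  unfolding bounded_operators_def by (auto intro: exI[of _ 0])

theorem mainTheorem5:
  fixes \<phi> :: "('a::complex_banach \<Rightarrow> 'a) \<Rightarrow> ('a \<Rightarrow> 'a)"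
  assumes "infinite_dimensional TYPE('a)"
    and "\<phi> ` bounded_operators = bounded_operators"
    and "\<And>T S. T \<in> bounded_operators \<Longrightarrow> S \<in> bounded_operators \<Longrightarrow>
           analytic_core (\<lambda>x. \<phi> T (\<phi> S x) + \<phi> S (\<phi> T x))
             = analytic_core (\<lambda>x. T (S x) + S (T x))"
  shows "\<forall>R\<in>bounded_operators. \<phi> R = (\<lambda>x. 0) \<longleftrightarrow> R = (\<lambda>x. 0)"
proof (intro ballI iffI)
  fix R :: "'a \<Rightarrow> 'a" assume R: "R \<in> bounded_operators" and pR: "\<phi> R = (\<lambda>x. 0)"
  show "R = (\<lambda>x. 0)"
  proof (rule zero_criterion[OF R])
    fix S :: "'a \<Rightarrow> 'a" assume S: "S \<in> bounded_operators"
    have pS: "\<phi> S \<in> bounded_operators" using assms(2) S by blast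
    have "(\<lambda>x. \<phi> R (\<phi> S x) + \<phi> S (\<phi> R x)) = (\<lambda>x. 0)"
      using pR bo_zero[OF pS] by simp
    thus "analytic_core (\<lambda>z. R (S z) + S (R z)) = analytic_core (\<lambda>z. 0)"
      using assms(3)[OF R S] by simp
  qed
next
  fix R :: "'a \<Rightarrow> 'a" assume R: "R \<in> bounded_operators" and R0: "R = (\<lambda>x. 0)"
  define Q where "Q = \<phi> (\<lambda>x. 0)"
  have Q: "Q \<in> bounded_operators" using assms(2) zero_bo unfolding Q_def by blast
  have "Q = (\<lambda>x. 0)"
  proof (rule zero_criterion[OF Q])
    fix A :: "'a \<Rightarrow> 'a" assume A: "A \<in> bounded_operators"
    then obtain S where S: "S \<in> bounded_operators" and AS: "A = \<phi> S" using assms(2) by force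
    have "(\<lambda>x. (\<lambda>x. 0) (S x) + S ((\<lambda>x. 0) x)) = (\<lambda>x. (0::'a))"
      using bo_zero[OF S] by simp
    thus "analytic_core (\<lambda>z. Q (A z) + A (Q z)) = analytic_core (\<lambda>z. 0)"
      using assms(3)[OF zero_bo S] unfolding Q_def AS by simp
  qed
  thus "\<phi> R = (\<lambda>x. 0)" using R0 Q_def by simp
qed

end
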